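(* Let $r<0$ be an integer and let $f(x)=\sum_{i=0}^{-r}\gamma_ix^i\in\mathbb{K}[x]$. Then $$\sum_{i=0}^m\binom{m}{i}\binom{1-r}{m+i}^{-1}\gamma_{m+i-1}=0\quad\text{for all }1\le m\le\lceil -r/2\rceil$$ if and only if there exist $\delta_0,\dots,\delta_{\lfloor -r/2\rfloor}\in\mathbb{K}$ with $$f(x)=(x-2)^{-r}\sum_{i=0}^{\lfloor -r/2\rfloor}\delta_i\left(\frac{x}{x-2}\right)^{2i}=\sum_{i=0}^{\lfloor -r/2\rfloor}\delta_i\,x^{2i}(x-2)^{-r-2i}.$$
   Context: $\mathbb{K}\in\{\mathbb{Q},\mathbb{R},\mathbb{C}\}$. *)

theory Defs
  imports "HOL-Computational_Algebra.Polynomial"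
begin

end

theory Submission
  imports Defs
begin

lemma coeff_lin_pow:
  fixes a b :: "'a::comm_ring_1"
  shows "coeff ([:a, b:] ^ p) t = of_nat (p choose t) * b ^ t * a ^ (p - t)"
proof (cases "t \<le> p")
  case True then show ?thesis by (rule coeff_linear_poly_power)
next
  case False
  have "degree ([:a, b:] ^ p) \<le> 1 * p"
    by (rule order.trans[OF degree_power_le]) simp
  then have "coeff ([:a, b:] ^ p) t = 0" using False by (intro coeff_eq_0) simp
  then show ?thesis using False by (simp add: binomial_eq_0)
qed

lemma coeff_xpow_mult:
  "coeff ([:0, 1:] ^ k * g) e = (if e < k then 0 else coeff g (e - k))"
proof -
  have "[:0,1:]^k = (monom 1 k :: 'a::comm_semiring_1 poly)" by (simp add: monom_altdef)
  then show ?thesis by (simp add: coeff_monom_mult)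
qed

lemma ceil_half: "nat \<lceil>of_nat n / (2::rat)\<rceil> = (n+1) div 2"
proof -
  have "\<lceil>of_nat n / (2::rat)\<rceil> = int ((n+1) div 2)"
  proof (rule ceiling_unique)
    show "of_int (int ((n + 1) div 2)) - 1 < rat_of_nat n / 2"
      by (cases "even n") (auto elim!: evenE oddE simp: field_simps)
    show "rat_of_nat n / 2 \<le> of_int (int ((n + 1) div 2))"
      by (cases "even n") (auto elim!: evenE oddE simp: field_simps)
  qed
  then show ?thesis by simp
qed

lemma floor_half: "nat \<lfloor>of_nat n / (2::rat)\<rfloor> = n div 2"
proof -
  have "\<lfloor>of_nat n / (2::rat)\<rfloor> = int (n div 2)"
  proof (rule floor_unique)
    show "of_int (int (n div 2)) \<le> rat_of_nat n / 2"
      by (cases "even n") (auto elim!: evenE oddE simp: field_simps)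
    show "rat_of_nat n / 2 < of_int (int (n div 2)) + 1"
      by (cases "even n") (auto elim!: evenE oddE simp: field_simps)
  qed
  then show ?thesis by simp
qed

lemma G_ident:
  fixes q m :: nat
  shows "(\<Sum>i=0..m. of_nat (m choose i) * (-1::'a::comm_ring_1) ^ (m - i) * of_nat ((m + i) choose q))
       = (if m \<le> q then of_nat (m choose (q - m)) else 0)"
proof -
  define y :: "'a poly" where "y = [:1, 1:]"
  have "[:0,1:] = y + [:-1:]" by (simp add: y_def)
  then have "y ^ m * [:0,1:] ^ m = y ^ m * (y + [:-1:]) ^ m" by simp
  also have "\<dots> = (\<Sum>i\<le>m. y ^ m * (of_nat (m choose i) * y ^ i * [:-1:] ^ (m - i)))"
    by (simp add: binomial_ring sum_distrib_left)
  also have "\<dots> = (\<Sum>i\<le>m. smult (of_nat (m choose i) * (-1) ^ (m - i)) (y ^ (m + i)))"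
  proof (rule sum.cong)
    fix i assume "i \<in> {..m}"
    have "y ^ m * (of_nat (m choose i) * y ^ i * [:-1:] ^ (m - i))
       = [:of_nat (m choose i) * (-1) ^ (m - i):] * (y ^ m * y ^ i)"
      by (simp add: of_nat_poly poly_const_pow mult_ac)
    then show "y ^ m * (of_nat (m choose i) * y ^ i * [:-1:] ^ (m - i)) =
         smult (of_nat (m choose i) * (-1) ^ (m - i)) (y ^ (m + i))"
      by (simp add: power_add)
  qed simp
  finally have eq: "[:0,1:] ^ m * y ^ m = (\<Sum>i\<le>m. smult (of_nat (m choose i) * (-1) ^ (m - i)) (y ^ (m + i)))"
    by (simp add: mult.commute)
  have "coeff ([:0,1:] ^ m * y ^ m) q = (if m \<le> q then of_nat (m choose (q - m)) else 0)"
    by (simp add: coeff_xpow_mult coeff_lin_pow y_def)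
  moreover have "coeff (\<Sum>i\<le>m. smult (of_nat (m choose i) * (-1) ^ (m - i)) (y ^ (m + i))) q
      = (\<Sum>i=0..m. of_nat (m choose i) * (-1::'a) ^ (m - i) * of_nat ((m + i) choose q))"
    by (simp add: coeff_sum coeff_lin_pow y_def atLeast0AtMost)
  ultimately show ?thesis using eq by simp
qed

definition Lm :: "nat \<Rightarrow> nat \<Rightarrow> 'a::field poly \<Rightarrow> 'a" where
  "Lm n m g = (\<Sum>i=0..m. of_nat (m choose i) / of_nat ((n+1) choose (m+i)) * coeff g (m+i-1))"

definition Vm :: "nat \<Rightarrow> nat \<Rightarrow> nat \<Rightarrow> 'a::field" where
  "Vm n m k = (if m \<le> k+1 then of_nat (m choose (k+1-m)) else 0) / of_nat ((n+1) choose (k+1))"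

lemma Lm_add: "Lm n m (p + q) = Lm n m p + Lm n m q"
  by (simp add: Lm_def sum.distrib algebra_simps)

lemma Lm_diff: "Lm n m (p - q) = Lm n m p - Lm n m q"
  by (simp add: Lm_def sum_subtractf algebra_simps)

lemma Lm_smult: "Lm n m (smult c p) = c * Lm n m p"
  by (simp add: Lm_def sum_distrib_left mult_ac)

lemma Lm_sum: "Lm n m (sum f A) = (\<Sum>x\<in>A. Lm n m (f x))"
  unfolding Lm_def coeff_sum sum_distrib_left by (rule sum.swap)

lemma Lm_monom:
  assumes m: "1 \<le> m"
  shows "Lm n m (monom c k) = c * Vm n m k"
proof (cases "m \<le> k+1")
  case True
  have "Lm n m (monom c k) = (\<Sum>i=0..m. if i = k+1-m then
          of_nat (m choose i) / of_nat ((n+1) choose (m+i)) * c else 0)"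
    unfolding Lm_def coeff_monom
    by (rule sum.cong) (use True m in auto)
  also have "\<dots> = c * Vm n m k"
    using True by (auto simp: Vm_def binomial_eq_0)
  finally show ?thesis .
next
  case False
  have "Lm n m (monom c k) = (\<Sum>i=0..m. 0)"
    unfolding Lm_def coeff_monom
    by (rule sum.cong) (use False m in auto)
  then show ?thesis using False by (simp add: Vm_def)
qed

lemma sign_aux: "i \<le> m \<Longrightarrow> k + 1 \<le> m + i \<Longrightarrow>
   (-1::'a::comm_ring_1) ^ (m + i - 1 - k) = (-1) ^ (k+1) * (-1) ^ (m - i)"
proof -
  assume a: "i \<le> m" "k + 1 \<le> m + i"
  have e1: "(-1::'a) ^ (m + i - 1 - k) * (-1) ^ (k+1) = (-1) ^ (m + i)"
  proof -
    have "m + i - 1 - k + (k+1) = m + i" using a by arith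
    then show ?thesis by (metis power_add)
  qed
  have "m + i = (m - i) + 2 * i" using a by simp
  then have "(-1::'a) ^ (m + i) = (-1) ^ (m - i) * ((-1) ^ 2) ^ i"
    by (metis power_add power_mult)
  then have e2: "(-1::'a) ^ (m + i) = (-1) ^ (m - i)" by simp
  have "(-1::'a) ^ (m + i - 1 - k) = (-1) ^ (m + i - 1 - k) * ((-1) ^ (k+1) * (-1) ^ (k+1))"
    by (simp flip: power_add add: power_mult[symmetric] mult_2[symmetric])
  also have "\<dots> = ((-1) ^ (m + i - 1 - k) * (-1) ^ (k+1)) * (-1) ^ (k+1)"
    by (simp only: mult.assoc)
  also have "\<dots> = (-1) ^ (m - i) * (-1) ^ (k+1)"
    by (simp only: e1 e2)
  also have "\<dots> = (-1) ^ (k+1) * (-1) ^ (m - i)"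
    by (rule mult.commute)
  finally show ?thesis .
qed

lemma Lm_basis:
  assumes k: "k \<le> n" and m: "1 \<le> m" "2 * m \<le> n + 1"
  shows "Lm n m ([:0,1:] ^ k * [:1,-1:] ^ (n - k) :: 'a::field_char_0 poly) = (-1) ^ (k+1) * Vm n m k"
proof -
  define D :: 'a where "D = of_nat ((n+1) choose (k+1))"
  have "(n+1) choose (k+1) \<noteq> 0" using k by simp
  then have D0: "D \<noteq> 0" unfolding D_def by (metis of_nat_eq_0_iff)
  have "Lm n m ([:0,1:] ^ k * [:1,-1:] ^ (n - k) :: 'a poly) =
     (\<Sum>i=0..m. (-1) ^ (k+1) / D * (of_nat (m choose i) * (-1) ^ (m - i) * of_nat ((m + i) choose (k+1))))"
    unfolding Lm_def
  proof (rule sum.cong)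
    fix i assume i: "i \<in> {0..m}"
    show "of_nat (m choose i) / of_nat ((n+1) choose (m+i)) * coeff ([:0,1:] ^ k * [:1,-1:] ^ (n - k) :: 'a poly) (m+i-1)
        = (-1) ^ (k+1) / D * (of_nat (m choose i) * (-1) ^ (m - i) * of_nat ((m + i) choose (k+1)))"
    proof (cases "m + i < k + 1")
      case True
      then have "m + i - 1 < k" using m by arith
      then show ?thesis using True by (simp add: coeff_xpow_mult binomial_eq_0)
    next
      case False
      have im: "i \<le> m" using i by simp
      have P: "m + i \<le> n + 1" using i m by simp
      have cm: "((n+1) choose (m+i)) * ((m+i) choose (k+1)) = ((n+1) choose (k+1)) * ((n+1-(k+1)) choose (m+i-(k+1)))"
        using False P by (intro choose_mult) auto
      have cm': "(of_nat ((n+1) choose (m+i)) :: 'a) * of_nat ((m+i) choose (k+1)) = D * of_nat ((n - k) choose (m+i-1-k))"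
        unfolding D_def using arg_cong[OF cm, of "of_nat :: nat \<Rightarrow> 'a"] by (simp add: diff_diff_add)
      have N0: "(of_nat ((n+1) choose (m+i)) :: 'a) \<noteq> 0" using P by simp
      have cf: "coeff ([:0,1:] ^ k * [:1,-1:] ^ (n - k) :: 'a poly) (m+i-1) =
          of_nat ((n - k) choose (m+i-1-k)) * (-1) ^ (k+1) * (-1) ^ (m - i)"
      proof -
        have nl: "\<not> (m + i - 1 < k)" using False by arith
        have sg: "(-1::'a) ^ (m + i - 1 - k) = (-1) ^ (k+1) * (-1) ^ (m - i)"
          using im False by (intro sign_aux) auto
        have "coeff ([:0,1:] ^ k * [:1,-1:] ^ (n - k) :: 'a poly) (m+i-1) =
          of_nat ((n - k) choose (m+i-1-k)) * (-1) ^ (m + i - 1 - k)"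
          using nl by (simp add: coeff_xpow_mult coeff_lin_pow)
        then show ?thesis by (simp only: sg mult.assoc)
      qed
      show ?thesis unfolding cf using N0 D0 cm'
        by (simp add: field_simps)
    qed
  qed simp
  also have "\<dots> = (-1) ^ (k+1) / D * (\<Sum>i=0..m. of_nat (m choose i) * (-1) ^ (m - i) * of_nat ((m + i) choose (k+1)))"
    by (simp add: sum_distrib_left)
  also have "\<dots> = (-1) ^ (k+1) * Vm n m k"
    by (simp add: G_ident Vm_def D_def)
  finally show ?thesis .
qed

lemma sign2:
  assumes "s \<le> a"
  shows "(-1::'a::comm_ring_1) ^ a * 2 ^ (a - s) * (-1) ^ (2 * j + s + 1) = - ((-2) ^ (a - s))"
proof -
  have a: "a = (a - s) + s" using assms by simp
  have "(-1::'a) ^ a = (-1) ^ (a - s) * (-1) ^ s" by (subst a) (simp only: power_add)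
  moreover have "(-1::'a) ^ (2 * j + s + 1) = - ((-1) ^ s)" by (simp add: power_add power_mult)
  moreover have "(-2::'a) ^ (a - s) = (-1) ^ (a - s) * 2 ^ (a - s)"
    by (metis mult_minus1 power_mult_distrib)
  moreover have "(-1::'a) ^ s * (-1) ^ s = 1" by (simp flip: power_add add: mult_2[symmetric] power_mult)
  ultimately show ?thesis by (simp add: algebra_simps)
qed

lemma E1:
  "([:0,1:] ^ (2*j) * [:-2,1:] ^ a :: 'a::comm_ring_1 poly) =
     (\<Sum>s\<le>a. smult (of_nat (a choose s) * (-2) ^ (a - s)) ([:0,1:] ^ (2*j+s)))"
proof -
  have "[:-2,1:] = [:0,1:] + [:-2::'a:]" by simp
  then have "([:0,1:] ^ (2*j) * [:-2,1:] ^ a :: 'a poly) = [:0,1:] ^ (2*j) * ([:0,1:] + [:-2:]) ^ a" by simp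
  also have "\<dots> = (\<Sum>s\<le>a. [:0,1:] ^ (2*j) * (of_nat (a choose s) * [:0,1:] ^ s * [:-2:] ^ (a - s)))"
    by (simp only: binomial_ring sum_distrib_left)
  also have "\<dots> = (\<Sum>s\<le>a. smult (of_nat (a choose s) * (-2) ^ (a - s)) ([:0,1:] ^ (2*j+s)))"
  proof (rule sum.cong)
    fix s assume "s \<in> {..a}"
    have "([:0,1:] :: 'a poly) ^ (2*j) * (of_nat (a choose s) * [:0,1:] ^ s * [:-2:] ^ (a - s))
       = [:of_nat (a choose s) * (-2) ^ (a - s):] * ([:0,1:] ^ (2*j) * [:0,1:] ^ s)"
      by (simp add: of_nat_poly poly_const_pow mult_ac)
    then show "([:0,1:] :: 'a poly) ^ (2*j) * (of_nat (a choose s) * [:0,1:] ^ s * [:-2:] ^ (a - s)) =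
         smult (of_nat (a choose s) * (-2) ^ (a - s)) ([:0,1:] ^ (2*j+s))"
      by (simp add: power_add)
  qed simp
  finally show ?thesis .
qed

lemma smult_sum_right: "smult c (sum f A) = (\<Sum>x\<in>A. smult c (f x))"
  by (induction A rule: infinite_finite_induct) (auto simp: smult_add_right)

lemma E2:
  assumes "2 * j + a = n"
  shows "([:0,1:] ^ (2*j) * [:-2,1:] ^ a :: 'a::comm_ring_1 poly) =
     (\<Sum>s\<le>a. smult ((-1) ^ a * of_nat (a choose s) * 2 ^ (a - s))
        ([:0,1:] ^ (2*j+s) * [:1,-1:] ^ (n - (2*j+s))))"
proof -
  have eq: "[:-2,1:] = smult (-1) ([:0,1:] + smult 2 [:1,-1::'a:])" by simp
  have "[:-2,1:] ^ a = smult ((-1) ^ a) (([:0,1:] + smult 2 [:1,-1::'a:]) ^ a)"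
    by (simp only: eq smult_power)
  then have "([:0,1:] ^ (2*j) * [:-2,1:] ^ a :: 'a poly) =
      (\<Sum>s\<le>a. [:0,1:] ^ (2*j) * smult ((-1) ^ a) (of_nat (a choose s) * [:0,1:] ^ s * (smult 2 [:1,-1:]) ^ (a - s)))"
    by (simp only: binomial_ring sum_distrib_left smult_sum_right mult_smult_right)
  also have "\<dots> = (\<Sum>s\<le>a. smult ((-1) ^ a * of_nat (a choose s) * 2 ^ (a - s))
        ([:0,1:] ^ (2*j+s) * [:1,-1:] ^ (n - (2*j+s))))"
  proof (rule sum.cong)
    fix s assume "s \<in> {..a}"
    then have ns: "n - (2*j+s) = a - s" using assms by auto
    have sp: "(smult 2 [:1,-1:]) ^ (a - s) = smult (2 ^ (a - s)) ([:1,-1::'a:] ^ (a - s))"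
      by (rule smult_power)
    have "([:0,1:] :: 'a poly) ^ (2*j) * smult ((-1) ^ a) (of_nat (a choose s) * [:0,1:] ^ s * (smult 2 [:1,-1:]) ^ (a - s))
       = smult ((-1) ^ a * of_nat (a choose s) * 2 ^ (a - s)) ([:0,1:] ^ (2*j) * [:0,1:] ^ s * [:1,-1:] ^ (a - s))"
      unfolding sp by (simp add: of_nat_poly mult_ac)
    then show "([:0,1:] :: 'a poly) ^ (2*j) * smult ((-1) ^ a) (of_nat (a choose s) * [:0,1:] ^ s * (smult 2 [:1,-1:]) ^ (a - s)) =
       smult ((-1) ^ a * of_nat (a choose s) * 2 ^ (a - s)) ([:0,1:] ^ (2*j+s) * [:1,-1:] ^ (n - (2*j+s)))"
      by (simp add: power_add ns)
  qed simp
  finally show ?thesis .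
qed

lemma Lm_b:
  assumes j: "2 * j \<le> n" and m: "1 \<le> m" "2 * m \<le> n + 1"
  shows "Lm n m ([:0,1:] ^ (2*j) * [:-2,1:] ^ (n - 2*j) :: 'a::field_char_0 poly) = 0"
proof -
  define a where "a = n - 2 * j"
  have ja: "2 * j + a = n" using j by (simp add: a_def)
  define S :: 'a where "S = (\<Sum>s\<le>a. of_nat (a choose s) * (-2) ^ (a - s) * Vm n m (2*j+s))"
  have mon: "[:0,1:] ^ e = (monom 1 e :: 'a poly)" for e by (simp add: monom_altdef)
  have "Lm n m ([:0,1:] ^ (2*j) * [:-2,1:] ^ a :: 'a poly) = S"
    unfolding E1 Lm_sum Lm_smult S_def using m by (simp add: mon Lm_monom)
  moreover have "Lm n m ([:0,1:] ^ (2*j) * [:-2,1:] ^ a :: 'a poly) = - S"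
  proof -
    have "Lm n m ([:0,1:] ^ (2*j) * [:-2,1:] ^ a :: 'a poly) =
      (\<Sum>s\<le>a. (-1) ^ a * of_nat (a choose s) * 2 ^ (a - s) * ((-1) ^ (2*j+s+1) * Vm n m (2*j+s)))"
      unfolding E2[OF ja] Lm_sum Lm_smult
    proof (rule sum.cong)
      fix s assume "s \<in> {..a}"
      then have "Lm n m ([:0,1:] ^ (2*j+s) * [:1,-1:] ^ (n - (2*j+s)) :: 'a poly) = (-1) ^ (2*j+s+1) * Vm n m (2*j+s)"
        using ja m by (intro Lm_basis) auto
      then show "(-1) ^ a * of_nat (a choose s) * 2 ^ (a - s) * Lm n m ([:0,1:] ^ (2*j+s) * [:1,-1:] ^ (n - (2*j+s)) :: 'a poly)
         = (-1) ^ a * of_nat (a choose s) * 2 ^ (a - s) * ((-1) ^ (2*j+s+1) * Vm n m (2*j+s))"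
        by (simp only:)
    qed simp
    also have "\<dots> = (\<Sum>s\<le>a. - (of_nat (a choose s) * (-2) ^ (a - s) * Vm n m (2*j+s)))"
    proof (rule sum.cong)
      fix s assume "s \<in> {..a}"
      then have h: "(-1::'a) ^ a * 2 ^ (a - s) * (-1) ^ (2 * j + s + 1) = - ((-2) ^ (a - s))"
        by (intro sign2) auto
      have "(-1) ^ a * of_nat (a choose s) * 2 ^ (a - s) * ((-1) ^ (2*j+s+1) * Vm n m (2*j+s)) =
          (of_nat (a choose s) * Vm n m (2*j+s)) * ((-1::'a) ^ a * 2 ^ (a - s) * (-1) ^ (2 * j + s + 1))"
        by (simp only: mult_ac)
      also have "\<dots> = (of_nat (a choose s) * Vm n m (2*j+s)) * - ((-2) ^ (a - s))"
        by (simp only: h)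
      also have "\<dots> = - (of_nat (a choose s) * (-2) ^ (a - s) * Vm n m (2*j+s) :: 'a)"
        by (simp only: mult_minus_right mult_minus_left mult_ac)
      finally show "(-1) ^ a * of_nat (a choose s) * 2 ^ (a - s) * ((-1) ^ (2*j+s+1) * Vm n m (2*j+s)) =
         - (of_nat (a choose s) * (-2) ^ (a - s) * Vm n m (2*j+s) :: 'a)" .
    qed simp
    finally show ?thesis by (simp add: S_def sum_negf)
  qed
  ultimately have "S = - S" by simp
  then have "S = 0" by simp
  then show ?thesis using \<open>Lm n m ([:0,1:] ^ (2*j) * [:-2,1:] ^ a :: 'a poly) = S\<close> by (simp add: a_def)
qed

lemma core:
  fixes f :: "'a::field_char_0 poly"
  assumes deg: "degree f \<le> n"
  shows "(\<forall>m. 1 \<le> m \<and> m \<le> (n+1) div 2 \<longrightarrow> Lm n m f = 0) \<longleftrightarrow>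
    (\<exists>\<delta>. f = (\<Sum>i=0..n div 2. smult (\<delta> i) ([:0,1:] ^ (2*i) * [:-2,1:] ^ (n - 2*i))))"
proof -
  define b :: "nat \<Rightarrow> 'a poly" where "b i = [:0,1:] ^ (2*i) * [:-2,1:] ^ (n - 2*i)" for i
  define K where "K = n div 2"
  define G where "G \<delta> = (\<Sum>i=0..K. smult (\<delta> i) (b i))" for \<delta>
  have LG: "Lm n m (G \<delta>) = 0" if "1 \<le> m" "m \<le> (n+1) div 2" for m \<delta>
  proof -
    have "Lm n m (G \<delta>) = (\<Sum>i=0..K. \<delta> i * Lm n m (b i))"
      by (simp add: G_def Lm_sum Lm_smult)
    also have "\<dots> = 0"
      by (rule sum.neutral) (use that in \<open>auto simp: b_def K_def intro!: Lm_b\<close>)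
    finally show ?thesis .
  qed
  show ?thesis
  proof
    assume "\<exists>\<delta>. f = (\<Sum>i=0..n div 2. smult (\<delta> i) ([:0,1:] ^ (2*i) * [:-2,1:] ^ (n - 2*i)))"
    then obtain \<delta> where "f = G \<delta>" by (auto simp: G_def b_def K_def)
    then show "\<forall>m. 1 \<le> m \<and> m \<le> (n+1) div 2 \<longrightarrow> Lm n m f = 0" using LG by auto
  next
    assume L0: "\<forall>m. 1 \<le> m \<and> m \<le> (n+1) div 2 \<longrightarrow> Lm n m f = 0"
    have cb0: "coeff (b i) e = 0" if "e < 2*i" for i e
      using that by (simp add: b_def coeff_xpow_mult)
    have cbd: "coeff (b i) (2*i) = (-2) ^ (n - 2*i)" for i
      by (simp add: b_def coeff_xpow_mult coeff_lin_pow)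
    have cbn: "coeff (b i) e = 0" if "n < e" "2*i \<le> n" for i e
      using that by (simp add: b_def coeff_xpow_mult coeff_lin_pow binomial_eq_0)
    have constr: "J \<le> K+1 \<Longrightarrow> \<exists>\<delta>. \<forall>j<J. coeff (G \<delta>) (2*j) = coeff f (2*j)" for J
    proof (induction J)
      case 0 then show ?case by auto
    next
      case (Suc J)
      then obtain \<delta> where IH: "\<forall>j<J. coeff (G \<delta>) (2*j) = coeff f (2*j)" by auto
      have JK: "J \<in> {0..K}" using Suc.prems by simp
      define t where "t = (coeff f (2*J) - coeff (G \<delta>) (2*J)) / (-2) ^ (n - 2*J)"
      define \<delta>' where "\<delta>' = \<delta>(J := \<delta> J + t)"
      have "G \<delta>' = (\<Sum>i=0..K. smult (\<delta> i) (b i) + (if i = J then smult t (b J) else 0))"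
        unfolding G_def by (rule sum.cong) (auto simp: \<delta>'_def smult_add_left)
      also have "\<dots> = G \<delta> + smult t (b J)"
        using JK by (simp add: sum.distrib G_def)
      finally have GG: "G \<delta>' = G \<delta> + smult t (b J)" .
      have "\<forall>j<Suc J. coeff (G \<delta>') (2*j) = coeff f (2*j)"
      proof (intro allI impI)
        fix j assume "j < Suc J"
        then consider "j < J" | "j = J" by linarith
        then show "coeff (G \<delta>') (2*j) = coeff f (2*j)"
        proof cases
          case 1 then show ?thesis using IH cb0[of "2*j" J] by (simp add: GG)
        next
          case 2
          have "(-2::'a) ^ (n - 2*J) \<noteq> 0" by simp
          then show ?thesis using 2 by (simp add: GG cbd t_def)
        qed
      qed
      then show ?case by blast
    qed
    obtain \<delta> where \<delta>: "\<forall>j<K+1. coeff (G \<delta>) (2*j) = coeff f (2*j)"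
      using constr[of "K+1"] by auto
    define h where "h = f - G \<delta>"
    have Lh: "Lm n m h = 0" if "1 \<le> m" "m \<le> (n+1) div 2" for m
      using L0 LG[OF that] that by (simp add: h_def Lm_diff)
    have ch: "coeff h e = 0" for e
    proof (induction e rule: less_induct)
      case (less e)
      show ?case
      proof (cases "n < e")
        case True
        have "coeff f e = 0" using True deg by (intro coeff_eq_0) simp
        moreover have "coeff (G \<delta>) e = 0"
          unfolding G_def coeff_sum by (rule sum.neutral) (use True in \<open>auto simp: K_def cbn\<close>)
        ultimately show ?thesis by (simp add: h_def)
      next
        case False
        show ?thesis
        proof (cases "even e")
          case True
          then obtain j where j: "e = 2*j" by auto
          then have "j < K+1" using False by (simp add: K_def)
          then show ?thesis using \<delta> j by (simp add: h_def)
        next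
          case odd: False
          define m where "m = (e+1) div 2"
          have em: "e = m + m - 1" "1 \<le> m" using odd by (auto simp: m_def elim!: oddE)
          have mb: "m \<le> (n+1) div 2" using False by (simp add: m_def div_le_mono)
          have "Lm n m h = of_nat (m choose m) / of_nat ((n+1) choose (m+m)) * coeff h (m+m-1)
              + (\<Sum>i\<in>{0..m}-{m}. of_nat (m choose i) / of_nat ((n+1) choose (m+i)) * coeff h (m+i-1))"
            unfolding Lm_def by (subst sum.remove[of _ m]) auto
          also have "(\<Sum>i\<in>{0..m}-{m}. of_nat (m choose i) / of_nat ((n+1) choose (m+i)) * coeff h (m+i-1)) = 0"
          proof (rule sum.neutral, intro ballI)
            fix i assume "i \<in> {0..m}-{m}"
            then have "m + i - 1 < e" using em by auto
            then show "of_nat (m choose i) / of_nat ((n+1) choose (m+i)) * coeff h (m+i-1) = 0"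
              using less.IH by simp
          qed
          finally have "of_nat ((n+1) choose (m+m)) \<noteq> (0::'a) \<Longrightarrow> coeff h e = 0"
            using Lh[OF em(2) mb] em(1) by simp
          moreover have "(n+1) choose (m+m) \<noteq> 0" using mb by simp
          ultimately show ?thesis by (metis of_nat_eq_0_iff)
        qed
      qed
    qed
    have "h = 0" by (rule poly_eqI) (simp add: ch)
    then have "f = G \<delta>" by (simp add: h_def)
    then show "\<exists>\<delta>. f = (\<Sum>i=0..n div 2. smult (\<delta> i) ([:0,1:] ^ (2*i) * [:-2,1:] ^ (n - 2*i)))"
      by (auto simp: G_def b_def K_def)
  qed
qed


theorem proposition4p9:
  fixes r :: int and f :: "'a :: field_char_0 poly"
  assumes "r < 0"
    and "degree f \<le> nat (- r)"
  shows "(\<forall>m::nat. 1 \<le> m \<and> m \<le> nat \<lceil>of_int (- r) / (2::rat)\<rceil> \<longrightarrow>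
            (\<Sum>i = 0..m. of_nat (m choose i) / of_nat (nat (1 - r) choose (m + i))
                * coeff f (m + i - 1)) = (0::'a))
         \<longleftrightarrow>
         (\<exists>\<delta> :: nat \<Rightarrow> 'a.
            f = (\<Sum>i = 0..nat \<lfloor>of_int (- r) / (2::rat)\<rfloor>.
                   smult (\<delta> i) ([:0, 1:] ^ (2 * i) * [:-2, 1:] ^ (nat (- r) - 2 * i))))"
proof -
  define n where "n = nat (- r)"
  have rn: "- r = int n" using assms(1) by (simp add: n_def)
  have q: "(of_int (- r) :: rat) = of_nat n" by (simp add: rn)
  have n1: "nat (1 - r) = n + 1" using assms(1) by (simp add: n_def)
  have "(\<forall>m. 1 \<le> m \<and> m \<le> (n+1) div 2 \<longrightarrow> Lm n m f = 0) \<longleftrightarrow>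
    (\<exists>\<delta>. f = (\<Sum>i=0..n div 2. smult (\<delta> i) ([:0,1:] ^ (2*i) * [:-2,1:] ^ (n - 2*i))))"
    by (rule core) (use assms(2) in \<open>simp add: n_def\<close>)
  then show ?thesis
    unfolding q n1 ceil_half floor_half n_def[symmetric] Lm_def .
qed

end
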